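(* Let $R$ be a Noetherian ring and let $\mathcal P_0:=\{I\in\mathcal I^\bullet(R)\mid \dim(R/I)=0\}$. Then: (1) $\mathcal P_0$ is dense in $\mathcal I^\bullet(R)$ with respect to the constructible topology; (2) if all residue fields of $R$ are finite, then $\mathcal P_0$ is the smallest dense subset of $\mathcal I^\bullet(R)$ with respect to the constructible topology.
   Context: $\mathcal I(R)$ is the set of ideals of $R$ and $\mathcal I^\bullet(R)$ the set of proper ideals. $\mathcal I(R)$ carries the Zariski topology with basis of open sets $\mathcal B(x_1,\ldots,x_n):=\{I\in\mathcal I(R)\mid x_1,\ldots,x_n\in I\}$; it is a spectral space. The constructible topology is the coarsest topology in which all open quasi-compact subsets of $\mathcal I(R)$ are clopen; $\mathcal I^\bullet(R)$ carries the subspace topology of the constructible topology. *)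

theory Defs
  imports "HOL-Analysis.Analysis" "HOL-Algebra.QuotRing" "HOL-Algebra.Ring_Divisibility"
begin

definition ideals_of :: "('a, 'b) ring_scheme \<Rightarrow> 'a set set" where
  "ideals_of R = {I. ideal I R}"

definition proper_ideals_of :: "('a, 'b) ring_scheme \<Rightarrow> 'a set set" where
  "proper_ideals_of R = {I. ideal I R \<and> I \<noteq> carrier R}"

definition zariski_basic :: "('a, 'b) ring_scheme \<Rightarrow> 'a set \<Rightarrow> 'a set set" where
  "zariski_basic R F = {I \<in> ideals_of R. F \<subseteq> I}"

definition zariski_ideals :: "('a, 'b) ring_scheme \<Rightarrow> 'a set topology" where
  "zariski_ideals R = topology_generated_by
     {zariski_basic R F | F. finite F \<and> F \<subseteq> carrier R}"

definition constructible_ideals :: "('a, 'b) ring_scheme \<Rightarrow> 'a set topology" where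
  "constructible_ideals R = topology_generated_by
     ({U. openin (zariski_ideals R) U \<and> compactin (zariski_ideals R) U} \<union>
      {ideals_of R - U | U. openin (zariski_ideals R) U \<and> compactin (zariski_ideals R) U})"

definition krull_dim :: "('a, 'b) ring_scheme \<Rightarrow> enat" where
  "krull_dim R = Sup {enat n | n. \<exists>P :: nat \<Rightarrow> 'a set.
      (\<forall>i\<le>n. primeideal (P i) R) \<and> (\<forall>i<n. P i \<subset> P (Suc i))}"

end

theory Submission
  imports Defs
begin


definition colI :: "('a, 'b) ring_scheme \<Rightarrow> 'a set \<Rightarrow> 'a \<Rightarrow> 'a set" where
  "colI R I a = {y \<in> carrier R. y \<otimes>\<^bsub>R\<^esub> a \<in> I}"
definition plusI :: "('a, 'b) ring_scheme \<Rightarrow> 'a set \<Rightarrow> 'a \<Rightarrow> 'a set" where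
  "plusI R I a = {i \<oplus>\<^bsub>R\<^esub> r \<otimes>\<^bsub>R\<^esub> a | i r. i \<in> I \<and> r \<in> carrier R}"
definition condC :: "('a, 'b) ring_scheme \<Rightarrow> 'a set \<Rightarrow> bool" where
  "condC R I = (\<forall>P Q. primeideal P R \<longrightarrow> primeideal Q R \<longrightarrow> I \<subseteq> P \<longrightarrow> P \<subseteq> Q \<longrightarrow> P = Q)"
definition fincos :: "('a, 'b) ring_scheme \<Rightarrow> 'a set \<Rightarrow> bool" where
  "fincos R I = (\<exists>S. finite S \<and> S \<subseteq> carrier R \<and> (\<forall>x\<in>carrier R. \<exists>s\<in>S. x \<ominus>\<^bsub>R\<^esub> s \<in> I))"

context cring begin

lemma ideal_cancel:
  assumes "ideal I R" "a \<in> I" "a \<oplus> b \<in> I" "b \<in> carrier R"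
  shows "b \<in> I"
proof -
  interpret I: ideal I R by fact
  have ac: "a \<in> carrier R" by (rule I.Icarr[OF assms(2)])
  have "b = (\<ominus> a) \<oplus> (a \<oplus> b)" using ac assms(4) by algebra
  moreover have "\<ominus> a \<in> I" by (rule I.a_inv_closed[OF assms(2)])
  ultimately show ?thesis using I.a_closed assms(3) by metis
qed

lemma ideal_minus:
  assumes "ideal I R" "a \<in> I" "b \<in> I"
  shows "a \<ominus> b \<in> I"
proof -
  interpret I: ideal I R by fact
  show ?thesis unfolding a_minus_def using assms(2,3) I.a_closed I.a_inv_closed by simp
qed

lemma colI_ideal:
  assumes "ideal I R" "a \<in> carrier R"
  shows "ideal (colI R I a) R"
proof -
  interpret I: ideal I R by fact
  show ?thesis
  proof (rule idealI)
    show "ring R" by (rule ring_axioms)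
    show "subgroup (colI R I a) (add_monoid R)"
    proof
      show "colI R I a \<subseteq> carrier (add_monoid R)" unfolding colI_def by auto
      show "\<one>\<^bsub>add_monoid R\<^esub> \<in> colI R I a" unfolding colI_def using assms I.zero_closed
        by simp
      fix x y assume x: "x \<in> colI R I a" and y: "y \<in> colI R I a"
      then have xc: "x \<in> carrier R" "x \<otimes> a \<in> I" and yc: "y \<in> carrier R" "y \<otimes> a \<in> I"
        unfolding colI_def by auto
      have "(x \<oplus> y) \<otimes> a = x \<otimes> a \<oplus> y \<otimes> a" using xc yc assms by algebra
      then show "x \<otimes>\<^bsub>add_monoid R\<^esub> y \<in> colI R I a" unfolding colI_def using xc yc I.a_closed
        by simp
      have "(\<ominus> x) \<otimes> a = \<ominus> (x \<otimes> a)" using xc assms by algebra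
      then have "(\<ominus> x) \<in> colI R I a" unfolding colI_def using xc I.a_inv_closed by simp
      then show "inv\<^bsub>add_monoid R\<^esub> x \<in> colI R I a" by (simp add: a_inv_def)
    qed
  next
    fix x y assume x: "x \<in> colI R I a" and y: "y \<in> carrier R"
    then have xc: "x \<in> carrier R" "x \<otimes> a \<in> I" unfolding colI_def by auto
    have e1: "(y \<otimes> x) \<otimes> a = y \<otimes> (x \<otimes> a)" using xc y assms by algebra
    have e2: "(x \<otimes> y) \<otimes> a = y \<otimes> (x \<otimes> a)" using xc y assms by algebra
    have "y \<otimes> (x \<otimes> a) \<in> I" using I.I_l_closed xc y by simp
    then show "y \<otimes> x \<in> colI R I a" "x \<otimes> y \<in> colI R I a" unfolding colI_def using e1 e2 xc y
      by auto
  qed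
qed

lemma plusI_ideal:
  assumes "ideal I R" "a \<in> carrier R"
  shows "ideal (plusI R I a) R"
proof -
  interpret I: ideal I R by fact
  show ?thesis
  proof (rule idealI)
  show "ring R" by (rule ring_axioms)
  show "subgroup (plusI R I a) (add_monoid R)"
  proof
    show "plusI R I a \<subseteq> carrier (add_monoid R)" unfolding plusI_def using I.Icarr assms by auto
    have "\<zero> = \<zero> \<oplus> \<zero> \<otimes> a" using assms by algebra
    then have "\<zero> \<in> plusI R I a" unfolding plusI_def using I.zero_closed zero_closed by blast
    then show "\<one>\<^bsub>add_monoid R\<^esub> \<in> plusI R I a" by simp
    fix x y assume x: "x \<in> plusI R I a" and y: "y \<in> plusI R I a"
    then obtain i r j s where ir: "i \<in> I" "r \<in> carrier R" "x = i \<oplus> r \<otimes> a"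
      and js: "j \<in> I" "s \<in> carrier R" "y = j \<oplus> s \<otimes> a" unfolding plusI_def by auto
    have ic: "i \<in> carrier R" "j \<in> carrier R" using ir js I.Icarr by auto
    have "x \<oplus> y = (i \<oplus> j) \<oplus> (r \<oplus> s) \<otimes> a" using ir js ic assms by algebra
    moreover have "i \<oplus> j \<in> I" using ir js I.a_closed by simp
    ultimately show "x \<otimes>\<^bsub>add_monoid R\<^esub> y \<in> plusI R I a" unfolding plusI_def using ir js by auto
    have "\<ominus> x = (\<ominus> i) \<oplus> (\<ominus> r) \<otimes> a" using ir ic assms by algebra
    moreover have "\<ominus> i \<in> I" using ir I.a_inv_closed by simp
    ultimately have "\<ominus> x \<in> plusI R I a" unfolding plusI_def using ir by auto
    then show "inv\<^bsub>add_monoid R\<^esub> x \<in> plusI R I a" by (simp add: a_inv_def)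
  qed
next
  fix x y assume x: "x \<in> plusI R I a" and y: "y \<in> carrier R"
  then obtain i r where ir: "i \<in> I" "r \<in> carrier R" "x = i \<oplus> r \<otimes> a" unfolding plusI_def by auto
  have ic: "i \<in> carrier R" using ir I.Icarr by auto
  have e1: "y \<otimes> x = y \<otimes> i \<oplus> (y \<otimes> r) \<otimes> a" using ir ic y assms by algebra
  have e2: "x \<otimes> y = y \<otimes> i \<oplus> (y \<otimes> r) \<otimes> a" using ir ic y assms by algebra
  have "y \<otimes> i \<in> I" using ir y I.I_l_closed by simp
  then show "y \<otimes> x \<in> plusI R I a" "x \<otimes> y \<in> plusI R I a" unfolding plusI_def using e1 e2 ir y
    by auto
qed
qed

lemma plusI_sup: assumes "ideal I R" "a \<in> carrier R" shows "I \<subseteq> plusI R I a" "a \<in> plusI R I a"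
proof -
  interpret I: ideal I R by fact
  show "I \<subseteq> plusI R I a"
  proof
    fix x assume x: "x \<in> I"
    have "x \<in> carrier R" using x I.Icarr by simp
    moreover have "x = x \<oplus> \<zero> \<otimes> a" using calculation assms by algebra
    ultimately show "x \<in> plusI R I a" unfolding plusI_def using x by blast
  qed
  have "a = \<zero> \<oplus> \<one> \<otimes> a" using assms by algebra
  then show "a \<in> plusI R I a" unfolding plusI_def using I.zero_closed by blast
qed

end


lemma (in noetherian_ring) noeth_max:
  assumes "S \<noteq> {}" "S \<subseteq> {I. ideal I R}"
  shows "\<exists>M\<in>S. \<forall>X\<in>S. M \<subseteq> X \<longrightarrow> X = M"
proof (rule subset_Zorn_nonempty[OF assms(1)])
  fix C assume C: "C \<noteq> {}" "subset.chain S C"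
  have "subset.chain {I. ideal I R} C" using assms(2) C(2) unfolding pred_on.chain_def by auto
  then have "\<Union>C \<in> C" by (rule ideal_chain_is_trivial[OF C(1)])
  then show "\<Union>C \<in> S" using C(2) unfolding pred_on.chain_def by auto
qed

context cring begin

lemma prime_pow:
  assumes "primeideal P R" "x \<in> carrier R" "x [^] (n::nat) \<in> P"
  shows "x \<in> P"
  using assms(3)
proof (induction n)
  case 0
  interpret P: primeideal P R by fact
  have "\<one> \<in> P" using 0 by simp
  then have "carrier R = P" using P.one_imp_carrier by simp
  then show ?case using P.I_notcarr by simp
next
  case (Suc n)
  interpret P: primeideal P R by fact
  have "x [^] n \<otimes> x \<in> P" using Suc.prems by simp
  then have "x [^] n \<in> P \<or> x \<in> P" by (rule P.I_prime[OF nat_pow_closed[OF assms(2)] assms(2)])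
  then show ?case using Suc.IH by blast
qed

lemma single_avoid:
  assumes N: "noetherian_ring R" and J: "ideal J R" and g: "g \<in> carrier R" "g \<notin> J"
  shows "\<exists>I. ideal I R \<and> J \<subseteq> I \<and> g \<notin> I \<and> condC R I"
proof -
  interpret N: noetherian_ring R by fact
  define S where "S = {I. ideal I R \<and> J \<subseteq> I \<and> g \<notin> I}"
  have "J \<in> S" using J g unfolding S_def by simp
  then have "S \<noteq> {}" by blast
  moreover have "S \<subseteq> {I. ideal I R}" unfolding S_def by blast
  ultimately have "\<exists>M\<in>S. \<forall>X\<in>S. M \<subseteq> X \<longrightarrow> X = M" by (rule N.noeth_max)
  then obtain I where IS: "I \<in> S" and Imax: "\<And>X. X \<in> S \<Longrightarrow> I \<subseteq> X \<Longrightarrow> X = I"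
    by blast
  have I: "ideal I R" "J \<subseteq> I" "g \<notin> I" using IS unfolding S_def by auto
  interpret I: ideal I R by fact
  have key: "g \<in> K" if "ideal K R" "I \<subseteq> K" "K \<noteq> I" for K
  proof (rule ccontr)
    assume "g \<notin> K"
    then have "K \<in> S" using that I unfolding S_def by auto
    then show False using Imax that(2,3) by blast
  qed
  have nil: "\<exists>n. x [^] (n::nat) \<in> I" if x: "x \<in> carrier R" "x \<otimes> g \<in> I" for x
  proof -
    define T where "T = {colI R I (x [^] (k::nat)) | k. True}"
    have "T \<noteq> {}" "T \<subseteq> {I. ideal I R}" unfolding T_def using colI_ideal[OF I(1)] x by auto
    then have "\<exists>M\<in>T. \<forall>X\<in>T. M \<subseteq> X \<longrightarrow> X = M" by (rule N.noeth_max)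
    then obtain M where MT: "M \<in> T" and Mmax: "\<And>X. X \<in> T \<Longrightarrow> M \<subseteq> X \<Longrightarrow> X = M"
      by blast
    then obtain n :: nat where n: "M = colI R I (x [^] n)" unfolding T_def by blast
    have sub: "colI R I (x [^] n) \<subseteq> colI R I (x [^] Suc n)"
    proof
      fix y assume "y \<in> colI R I (x [^] n)"
      then have y: "y \<in> carrier R" "y \<otimes> x [^] n \<in> I" unfolding colI_def by auto
      have "y \<otimes> x [^] Suc n = (y \<otimes> x [^] n) \<otimes> x" using y x by (simp add: m_assoc)
      then show "y \<in> colI R I (x [^] Suc n)" unfolding colI_def using y I.I_r_closed x by simp
    qed
    have eq: "colI R I (x [^] Suc n) = colI R I (x [^] n)"
      using Mmax[of "colI R I (x [^] Suc n)"] sub n unfolding T_def by blast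
    show ?thesis
    proof (rule ccontr)
      assume "\<not> ?thesis"
      then have xn: "x [^] n \<notin> I" by blast
      define y where "y = x [^] n"
      have yc: "y \<in> carrier R" unfolding y_def using x by simp
      have "plusI R I y \<noteq> I" using plusI_sup(2)[OF I(1) yc] xn unfolding y_def by auto
      then have "g \<in> plusI R I y"
        by (rule key[OF plusI_ideal[OF I(1) yc] plusI_sup(1)[OF I(1) yc]])
      then obtain i r where ir: "i \<in> I" "r \<in> carrier R" "g = i \<oplus> r \<otimes> y" unfolding plusI_def by blast
      have ic: "i \<in> carrier R" using ir I.Icarr by simp
      have e: "x \<otimes> g = x \<otimes> i \<oplus> r \<otimes> (y \<otimes> x)" using ir ic x yc by algebra
      have xi: "x \<otimes> i \<in> I" using ir x I.I_l_closed by simp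
      have "x \<otimes> i \<oplus> r \<otimes> (y \<otimes> x) \<in> I" using x(2) e by simp
      then have "r \<otimes> (y \<otimes> x) \<in> I" by (rule ideal_cancel[OF I(1) xi]) (use ir yc x in simp)
      then have "r \<in> colI R I (x [^] Suc n)" unfolding colI_def y_def using ir by simp
      then have "r \<in> colI R I (x [^] n)" using eq by simp
      then have "r \<otimes> y \<in> I" unfolding colI_def y_def by simp
      then have "g \<in> I" using ir I.a_closed by simp
      then show False using I(3) by simp
    qed
  qed
  have primeq: "P = colI R I g" if P: "primeideal P R" "I \<subseteq> P" for P
  proof
    interpret P: primeideal P R by fact
    show "colI R I g \<subseteq> P"
    proof
      fix x assume "x \<in> colI R I g"
      then have x: "x \<in> carrier R" "x \<otimes> g \<in> I" unfolding colI_def by auto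
      obtain n where "x [^] (n::nat) \<in> I" using nil[OF x] by blast
      then show "x \<in> P" using prime_pow[OF P(1) x(1)] P(2) by blast
    qed
    show "P \<subseteq> colI R I g"
    proof
      fix x assume xP: "x \<in> P"
      have xc: "x \<in> carrier R" using xP P.Icarr by simp
      show "x \<in> colI R I g"
      proof (rule ccontr)
        assume "x \<notin> colI R I g"
        then have nx: "x \<otimes> g \<notin> I" unfolding colI_def using xc by simp
        have xg: "x \<otimes> g \<in> carrier R" using xc g by simp
        have "plusI R I (x \<otimes> g) \<noteq> I" using plusI_sup(2)[OF I(1) xg] nx by auto
        then have "g \<in> plusI R I (x \<otimes> g)"
          by (rule key[OF plusI_ideal[OF I(1) xg] plusI_sup(1)[OF I(1) xg]])
        then obtain i r where ir: "i \<in> I" "r \<in> carrier R" "g = i \<oplus> r \<otimes> (x \<otimes> g)" unfolding plusI_def by blast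
        have ic: "i \<in> carrier R" using ir I.Icarr by simp
        define z where "z = r \<otimes> (x \<otimes> g)"
        have zc: "z \<in> carrier R" unfolding z_def using ir xc g by simp
        have gz: "g = i \<oplus> z" using ir(3) unfolding z_def .
        have "g \<ominus> z = (i \<oplus> z) \<ominus> z" using gz by simp
        also have "\<dots> = i" using ic zc by algebra
        finally have gzi: "g \<ominus> z = i" .
        have "(\<one> \<ominus> r \<otimes> x) \<otimes> g = g \<ominus> z" unfolding z_def using ir xc g by algebra
        then have "(\<one> \<ominus> r \<otimes> x) \<otimes> g = i" using gzi by simp
        then have "\<one> \<ominus> r \<otimes> x \<in> colI R I g" unfolding colI_def using ir xc by simp
        then have a1: "\<one> \<ominus> r \<otimes> x \<in> P" using \<open>colI R I g \<subseteq> P\<close> by blast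
        have a2: "r \<otimes> x \<in> P" using xP ir P.I_l_closed by simp
        have "\<one> = (\<one> \<ominus> r \<otimes> x) \<oplus> r \<otimes> x" using ir xc by algebra
        moreover have "(\<one> \<ominus> r \<otimes> x) \<oplus> r \<otimes> x \<in> P" by (rule P.a_closed[OF a1 a2])
        ultimately have "\<one> \<in> P" by simp
        then show False using P.one_imp_carrier P.I_notcarr by simp
      qed
    qed
  qed
  have "condC R I" unfolding condC_def
  proof (intro allI impI)
    fix P Q assume "primeideal P R" "primeideal Q R" "I \<subseteq> P" "P \<subseteq> Q"
    then show "P = Q" using primeq[of P] primeq[of Q] by blast
  qed
  then show ?thesis using I by blast
qed

end


context cring begin

lemma quot_carrier_rep:
  assumes "ideal I R" "X \<in> carrier (R Quot I)"
  shows "\<exists>a\<in>carrier R. X = I +> a"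
  using assms(2) unfolding FactRing_def A_RCOSETS_def' by auto

lemma quot_prime_up:
  assumes I: "ideal I R" and P: "primeideal P' (R Quot I)"
  shows "primeideal (\<Union>P') R \<and> I \<subseteq> \<Union>P'"
proof -
  interpret P: primeideal P' "R Quot I" by fact
  have hom: "(+>) I \<in> ring_hom R (R Quot I)" by (rule ideal.rcos_ring_hom[OF I])
  have Psub: "P' \<subseteq> carrier (R Quot I)" using P.Icarr by auto
  have mem: "(a \<in> \<Union>P') = (I +> a \<in> P')" if "a \<in> carrier R" for a
    by (rule canonical_proj_vimage_mem_iff[OF I Psub that])
  have id: "ideal (\<Union>P') R" by (rule quot_ideal_imp_ring_ideal[OF I P.is_ideal])
  have "\<zero>\<^bsub>R Quot I\<^esub> \<in> P'" by (rule additive_subgroup.zero_closed[OF ideal.axioms(1)[OF P.is_ideal]])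
  moreover have "\<zero>\<^bsub>R Quot I\<^esub> = I" unfolding FactRing_def by simp
  ultimately have "I \<in> P'" by simp
  then have sub: "I \<subseteq> \<Union>P'" by auto
  have pr: "primeideal (\<Union>P') R"
  proof (rule primeidealI[OF id is_cring])
    show "carrier R \<noteq> \<Union>P'"
    proof
      assume h: "carrier R = \<Union>P'"
      have "\<one> \<in> \<Union>P'" using one_closed unfolding h .
      then have "I +> \<one> \<in> P'" using mem[OF one_closed] by simp
      moreover have "I +> \<one> = \<one>\<^bsub>R Quot I\<^esub>" using ring_hom_one[OF hom] .
      ultimately have "carrier (R Quot I) = P'" using P.one_imp_carrier by simp
      then show False using P.I_notcarr by simp
    qed
  next
    fix a b assume ab: "a \<in> carrier R" "b \<in> carrier R" "a \<otimes> b \<in> \<Union>P'"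
    then have "I +> (a \<otimes> b) \<in> P'" using mem[of "a \<otimes> b"] by simp
    moreover have "I +> (a \<otimes> b) = (I +> a) \<otimes>\<^bsub>R Quot I\<^esub> (I +> b)"
      by (rule ring_hom_mult[OF hom ab(1,2)])
    ultimately have "I +> a \<in> P' \<or> I +> b \<in> P'"
      using P.I_prime ring_hom_closed[OF hom ab(1)] ring_hom_closed[OF hom ab(2)] by simp
    then show "a \<in> \<Union>P' \<or> b \<in> \<Union>P'" using mem ab by simp
  qed
  show ?thesis using pr sub by simp
qed

lemma quot_prime_down:
  assumes I: "ideal I R" and P: "primeideal P R" and IP: "I \<subseteq> P"
  shows "primeideal ((+>) I ` P) (R Quot I)"
proof -
  interpret P: primeideal P R by fact
  have hom: "(+>) I \<in> ring_hom R (R Quot I)" by (rule ideal.rcos_ring_hom[OF I])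
  have Qc: "cring (R Quot I)" by (rule ideal.quotient_is_cring[OF I is_cring])
  have id: "ideal ((+>) I ` P) (R Quot I)" by (rule ring_ideal_imp_quot_ideal[OF I P.is_ideal])
  have Psub: "(+>) I ` P \<subseteq> carrier (R Quot I)"
    using ring_hom_closed[OF hom] P.Icarr by auto
  have U: "\<Union>((+>) I ` P) = P" using iffD1[OF ideal_incl_iff[OF I P.is_ideal] IP] by (rule sym)
  have mem: "(a \<in> P) = (I +> a \<in> (+>) I ` P)" if "a \<in> carrier R" for a
    using canonical_proj_vimage_mem_iff[OF I Psub that] U by simp
  show ?thesis
  proof (rule primeidealI[OF id Qc])
    show "carrier (R Quot I) \<noteq> (+>) I ` P"
    proof
      assume "carrier (R Quot I) = (+>) I ` P"
      then have "I +> \<one> \<in> (+>) I ` P" using ring_hom_closed[OF hom one_closed] by simp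
      then have "\<one> \<in> P" using mem[of \<one>] by simp
      then show False using P.one_imp_carrier P.I_notcarr by simp
    qed
  next
    fix X Y assume XY: "X \<in> carrier (R Quot I)" "Y \<in> carrier (R Quot I)"
      "X \<otimes>\<^bsub>R Quot I\<^esub> Y \<in> (+>) I ` P"
    obtain a where a: "a \<in> carrier R" "X = I +> a" using quot_carrier_rep[OF I XY(1)] by blast
    obtain b where b: "b \<in> carrier R" "Y = I +> b" using quot_carrier_rep[OF I XY(2)] by blast
    have "I +> (a \<otimes> b) = X \<otimes>\<^bsub>R Quot I\<^esub> Y"
      using ring_hom_mult[OF hom a(1) b(1)] a b by simp
    then have "a \<otimes> b \<in> P" using mem[of "a \<otimes> b"] a b XY(3) by simp
    then have "a \<in> P \<or> b \<in> P" using P.I_prime a b by simp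
    then show "X \<in> (+>) I ` P \<or> Y \<in> (+>) I ` P" using a b by auto
  qed
qed

lemma chain_down:
  assumes I: "ideal I R" and p: "primeideal P R" "primeideal Q R" "I \<subseteq> P" "P \<subset> Q"
  shows "\<exists>P0 P1. primeideal P0 (R Quot I) \<and> primeideal P1 (R Quot I) \<and> P0 \<subset> P1"
proof -
    have d0: "primeideal ((+>) I ` P) (R Quot I)" by (rule quot_prime_down[OF I p(1) p(3)])
    have IQ0: "I \<subseteq> Q" using p(3,4) by blast
    have d1: "primeideal ((+>) I ` Q) (R Quot I)" by (rule quot_prime_down[OF I p(2) IQ0])
    have UP: "\<Union>((+>) I ` P) = P" using iffD1[OF ideal_incl_iff[OF I primeideal.axioms(1)[OF p(1)]] p(3)] by (rule sym)
    have UQ: "\<Union>((+>) I ` Q) = Q" using iffD1[OF ideal_incl_iff[OF I primeideal.axioms(1)[OF p(2)]] IQ0] by (rule sym)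
    have PQ: "P \<subseteq> Q" using p(4) by blast
    have "(+>) I ` P \<subseteq> (+>) I ` Q" by (rule image_mono[OF PQ])
    moreover have "(+>) I ` P \<noteq> (+>) I ` Q"
    proof
      assume "(+>) I ` P = (+>) I ` Q"
      then have "\<Union>((+>) I ` P) = \<Union>((+>) I ` Q)" by (rule arg_cong[where f=Union])
      then have "P = Q" unfolding UP UQ .
      then show False using p(4) by blast
    qed
    ultimately have ps: "(+>) I ` P \<subset> (+>) I ` Q" by (rule psubsetI)
    show ?thesis using d0 d1 ps by (intro exI[of _ "(+>) I ` P"] exI[of _ "(+>) I ` Q"] conjI)
qed

lemma chain_up:
  assumes I: "ideal I R" and p: "primeideal P0 (R Quot I)" "primeideal P1 (R Quot I)" "P0 \<subset> P1"
  shows "\<exists>P Q. primeideal P R \<and> primeideal Q R \<and> I \<subseteq> P \<and> P \<subset> Q"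
proof -
    have u0: "primeideal (\<Union>P0) R \<and> I \<subseteq> \<Union>P0" by (rule quot_prime_up[OF I p(1)])
    have u1: "primeideal (\<Union>P1) R \<and> I \<subseteq> \<Union>P1" by (rule quot_prime_up[OF I p(2)])
    have c: "(+>) I ` (\<Union>J') = J'" if J': "ideal J' (R Quot I)" for J'
    proof
      have sub: "J' \<subseteq> carrier (R Quot I)" using ideal.Icarr[OF J'] by blast
      have uc: "\<Union>J' \<subseteq> carrier R" by (rule canonical_proj_vimage_in_carrier[OF I sub])
      show "(+>) I ` (\<Union>J') \<subseteq> J'"
      proof
        fix X assume "X \<in> (+>) I ` (\<Union>J')"
        then obtain r where r: "r \<in> \<Union>J'" "X = I +> r" by blast
        have rc: "r \<in> carrier R" using r(1) uc by blast
        show "X \<in> J'" using canonical_proj_vimage_mem_iff[OF I sub rc] r by simp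
      qed
      show "J' \<subseteq> (+>) I ` (\<Union>J')"
      proof
        fix X assume X: "X \<in> J'"
        have Xc: "X \<in> carrier (R Quot I)" using X sub by blast
        obtain r where r: "r \<in> carrier R" "X = I +> r" using quot_carrier_rep[OF I Xc] by blast
        then have "r \<in> \<Union>J'" using canonical_proj_vimage_mem_iff[OF I sub r(1)] X by simp
        then show "X \<in> (+>) I ` (\<Union>J')" using r(2) by blast
      qed
    qed
    have s: "\<Union>P0 \<subseteq> \<Union>P1" using p(3) by blast
    have "\<Union>P0 \<noteq> \<Union>P1"
    proof
      assume "\<Union>P0 = \<Union>P1"
      then have "(+>) I ` (\<Union>P0) = (+>) I ` (\<Union>P1)" by (rule arg_cong)
      then have "P0 = P1" unfolding c[OF primeideal.axioms(1)[OF p(1)]] c[OF primeideal.axioms(1)[OF p(2)]] .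
      then show False using p(3) by blast
    qed
    then have ps: "\<Union>P0 \<subset> \<Union>P1" using s by (rule psubsetI[rotated])
    show ?thesis using u0 u1 ps by (intro exI[of _ "\<Union>P0"] exI[of _ "\<Union>P1"] conjI) simp_all
qed

lemma krull_step1:
  "krull_dim (R Quot I) = 0 \<longleftrightarrow>
     \<not> (\<exists>P0 P1. primeideal P0 (R Quot I) \<and> primeideal P1 (R Quot I) \<and> P0 \<subset> P1)"
proof
    assume k: "krull_dim (R Quot I) = 0"
    show "\<not> (\<exists>P0 P1. primeideal P0 (R Quot I) \<and> primeideal P1 (R Quot I) \<and> P0 \<subset> P1)"
    proof
      assume "\<exists>P0 P1. primeideal P0 (R Quot I) \<and> primeideal P1 (R Quot I) \<and> P0 \<subset> P1"
      then obtain P0 P1 where p: "primeideal P0 (R Quot I)" "primeideal P1 (R Quot I)" "P0 \<subset> P1"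
        by (elim exE conjE)
      define P :: "nat \<Rightarrow> 'a set set" where "P = (\<lambda>i. if i = 0 then P0 else P1)"
      have "(\<forall>i\<le>1. primeideal (P i) (R Quot I)) \<and> (\<forall>i<1. P i \<subset> P (Suc i))"
        unfolding P_def using p by auto
      then have "enat 1 \<in> {enat n | n. \<exists>P :: nat \<Rightarrow> 'a set set.
          (\<forall>i\<le>n. primeideal (P i) (R Quot I)) \<and> (\<forall>i<n. P i \<subset> P (Suc i))}" by blast
      then have "enat 1 \<le> krull_dim (R Quot I)" unfolding krull_dim_def by (rule Sup_upper)
      then have "(1::enat) \<le> krull_dim (R Quot I)" unfolding one_enat_def .
      then show False using k by simp
    qed
next
    assume np: "\<not> (\<exists>P0 P1. primeideal P0 (R Quot I) \<and> primeideal P1 (R Quot I) \<and> P0 \<subset> P1)"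
    have "\<forall>x\<in>{enat n | n. \<exists>P :: nat \<Rightarrow> 'a set set.
          (\<forall>i\<le>n. primeideal (P i) (R Quot I)) \<and> (\<forall>i<n. P i \<subset> P (Suc i))}. x = bot"
    proof
      fix x assume "x \<in> {enat n | n. \<exists>P :: nat \<Rightarrow> 'a set set.
          (\<forall>i\<le>n. primeideal (P i) (R Quot I)) \<and> (\<forall>i<n. P i \<subset> P (Suc i))}"
      then obtain n P where x: "x = enat n" and P: "\<forall>i\<le>n. primeideal (P i) (R Quot I)"
        "\<forall>i<n. P i \<subset> P (Suc i)" by blast
      have "n = 0"
      proof (rule ccontr)
        assume "n \<noteq> 0"
        then have "primeideal (P 0) (R Quot I)" "primeideal (P 1) (R Quot I)" "P 0 \<subset> P (Suc 0)"
          using P by auto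
        then show False using np by auto
      qed
      then show "x = bot" using x by (simp add: zero_enat_def bot_enat_def)
    qed
    then have "krull_dim (R Quot I) = bot" unfolding krull_dim_def by (rule Sup_bot_conv(1)[THEN iffD2])
    then show "krull_dim (R Quot I) = 0" by (simp add: bot_enat_def)
qed

lemma krull_zero_iff:
  assumes I: "ideal I R"
  shows "krull_dim (R Quot I) = 0 \<longleftrightarrow> condC R I"
proof
  assume k: "krull_dim (R Quot I) = 0"
  show "condC R I" unfolding condC_def
  proof (intro allI impI)
    fix P Q assume pq: "primeideal P R" "primeideal Q R" "I \<subseteq> P" "P \<subseteq> Q"
    show "P = Q"
    proof (rule ccontr)
      assume "P \<noteq> Q"
      then have "P \<subset> Q" using pq(4) by (rule psubsetI[rotated])
      then have "\<exists>P0 P1. primeideal P0 (R Quot I) \<and> primeideal P1 (R Quot I) \<and> P0 \<subset> P1"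
        by (rule chain_down[OF I pq(1,2,3)])
      then show False using k krull_step1 by simp
    qed
  qed
next
  assume c: "condC R I"
  have "\<not> (\<exists>P0 P1. primeideal P0 (R Quot I) \<and> primeideal P1 (R Quot I) \<and> P0 \<subset> P1)"
  proof
    assume "\<exists>P0 P1. primeideal P0 (R Quot I) \<and> primeideal P1 (R Quot I) \<and> P0 \<subset> P1"
    then obtain P0 P1 where p: "primeideal P0 (R Quot I)" "primeideal P1 (R Quot I)" "P0 \<subset> P1"
      by (elim exE conjE)
    obtain P Q where pq: "primeideal P R" "primeideal Q R" "I \<subseteq> P" "P \<subset> Q"
      using chain_up[OF I p] by (elim exE conjE)
    have "P \<subseteq> Q" using pq(4) by (rule psubset_imp_subset)
    then have "P = Q" using c pq(1,2,3) unfolding condC_def by simp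
    then show False using pq(4) by simp
  qed
  then show "krull_dim (R Quot I) = 0" using krull_step1 by simp
qed

end


context cring begin

lemma condC_inter:
  assumes I1: "ideal I1 R" and I2: "ideal I2 R" and c1: "condC R I1" and c2: "condC R I2"
  shows "condC R (I1 \<inter> I2)"
  unfolding condC_def
proof (intro allI impI)
  fix P Q assume pq: "primeideal P R" "primeideal Q R" "I1 \<inter> I2 \<subseteq> P" "P \<subseteq> Q"
  interpret P: primeideal P R by fact
  interpret A: ideal I1 R by fact
  interpret B: ideal I2 R by fact
  have "I1 \<subseteq> P \<or> I2 \<subseteq> P"
  proof (rule ccontr)
    assume "\<not> (I1 \<subseteq> P \<or> I2 \<subseteq> P)"
    then obtain a b where a: "a \<in> I1" "a \<notin> P" and b: "b \<in> I2" "b \<notin> P" by blast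
    have ac: "a \<in> carrier R" using a(1) A.Icarr by simp
    have bc: "b \<in> carrier R" using b(1) B.Icarr by simp
    have "a \<otimes> b \<in> I1" using A.I_r_closed a(1) bc by simp
    moreover have "a \<otimes> b \<in> I2" using B.I_l_closed b(1) ac by simp
    ultimately have "a \<otimes> b \<in> P" using pq(3) by blast
    then have "a \<in> P \<or> b \<in> P" using P.I_prime ac bc by simp
    then show False using a b by simp
  qed
  then show "P = Q"
  proof
    assume "I1 \<subseteq> P" then show "P = Q" using c1 pq(1,2,4) unfolding condC_def by simp
  next
    assume "I2 \<subseteq> P" then show "P = Q" using c2 pq(1,2,4) unfolding condC_def by simp
  qed
qed

lemma condC_mono:
  assumes "condC R I" "I \<subseteq> I'"
  shows "condC R I'"
  unfolding condC_def
proof (intro allI impI)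
  fix P Q assume pq: "primeideal P R" "primeideal Q R" "I' \<subseteq> P" "P \<subseteq> Q"
  have "I \<subseteq> P" using assms(2) pq(3) by (rule subset_trans)
  then show "P = Q" using assms(1) pq(1,2,4) unfolding condC_def by simp
qed

lemma multi_avoid:
  assumes N: "noetherian_ring R" and J: "ideal J R"
  shows "finite G \<Longrightarrow> G \<noteq> {} \<Longrightarrow> G \<subseteq> carrier R \<Longrightarrow> (\<forall>g\<in>G. g \<notin> J) \<Longrightarrow>
    \<exists>I. ideal I R \<and> J \<subseteq> I \<and> (\<forall>g\<in>G. g \<notin> I) \<and> condC R I"
proof (induction G rule: finite_ne_induct)
  case (singleton g)
  then have gg: "g \<in> carrier R" "g \<notin> J" by auto
  obtain I where I: "ideal I R" "J \<subseteq> I" "g \<notin> I" "condC R I"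
    using single_avoid[OF N J gg] by (elim exE conjE)
  show ?case
    by (rule exI[of _ I]) (use I in simp)
next
  case (insert g G)
  then have gc: "g \<in> carrier R" "g \<notin> J" by auto
  obtain I2 where I2: "ideal I2 R" "J \<subseteq> I2" "g \<notin> I2" "condC R I2"
    using single_avoid[OF N J gc] by (elim exE conjE)
  have "\<exists>I. ideal I R \<and> J \<subseteq> I \<and> (\<forall>g\<in>G. g \<notin> I) \<and> condC R I"
    using insert by simp
  then obtain I1 where I1: "ideal I1 R" "J \<subseteq> I1" "\<forall>g\<in>G. g \<notin> I1" "condC R I1"
    by (elim exE conjE)
  have "ideal (I1 \<inter> I2) R" by (rule i_intersect[OF I1(1) I2(1)])
  moreover have "condC R (I1 \<inter> I2)" by (rule condC_inter[OF I1(1) I2(1) I1(4) I2(4)])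
  moreover have "J \<subseteq> I1 \<inter> I2" using I1(2) I2(2) by blast
  moreover have "\<forall>h\<in>insert g G. h \<notin> I1 \<inter> I2" using I1(3) I2(3) by blast
  ultimately show ?case by (intro exI[of _ "I1 \<inter> I2"]) simp
qed

lemma main_alg:
  assumes N: "noetherian_ring R" and J: "ideal J R" "J \<noteq> carrier R" and G: "finite G" "\<forall>g\<in>G. g \<notin> J"
  shows "\<exists>I. ideal I R \<and> I \<noteq> carrier R \<and> J \<subseteq> I \<and> (\<forall>g\<in>G. g \<notin> I) \<and> condC R I"
proof -
  interpret J: ideal J R by fact
  have "\<one> \<notin> J" using J.one_imp_carrier J(2) by auto
  define G' where "G' = insert \<one> (G \<inter> carrier R)"
  have gg: "finite G'" "G' \<noteq> {}" "G' \<subseteq> carrier R" "\<forall>g\<in>G'. g \<notin> J"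
    unfolding G'_def using G \<open>\<one> \<notin> J\<close> by auto
  obtain I where I: "ideal I R" "J \<subseteq> I" "\<forall>g\<in>G'. g \<notin> I" "condC R I"
    using multi_avoid[OF N J(1) gg] by (elim exE conjE)
  interpret I: ideal I R by fact
  have "\<one> \<notin> I" using I(3) unfolding G'_def by simp
  then have "I \<noteq> carrier R" by auto
  moreover have "\<forall>g\<in>G. g \<notin> I" using I(3) I.Icarr unfolding G'_def by auto
  ultimately show ?thesis using I by (intro exI[of _ I]) simp
qed

lemma fincos_combine:
  assumes I: "ideal I R" and a: "a \<in> carrier R"
    and f1: "fincos R (plusI R I a)" and f2: "fincos R (colI R I a)"
  shows "fincos R I"
proof -
  interpret I: ideal I R by fact
  obtain S1 where S1: "finite S1" "S1 \<subseteq> carrier R" "\<forall>x\<in>carrier R. \<exists>s\<in>S1. x \<ominus> s \<in> plusI R I a"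
    using f1 unfolding fincos_def by (elim exE conjE) 
  obtain S2 where S2: "finite S2" "S2 \<subseteq> carrier R" "\<forall>x\<in>carrier R. \<exists>s\<in>S2. x \<ominus> s \<in> colI R I a"
    using f2 unfolding fincos_def by (elim exE conjE) 
  define S where "S = (\<lambda>(s1, s2). s1 \<oplus> s2 \<otimes> a) ` (S1 \<times> S2)"
  have "finite S" unfolding S_def using S1(1) S2(1) by simp
  moreover have "S \<subseteq> carrier R" unfolding S_def using S1(2) S2(2) a by auto
  moreover have "\<forall>x\<in>carrier R. \<exists>s\<in>S. x \<ominus> s \<in> I"
  proof
    fix x assume x: "x \<in> carrier R"
    obtain s1 where s1: "s1 \<in> S1" "x \<ominus> s1 \<in> plusI R I a" using S1(3) x by blast
    have s1c: "s1 \<in> carrier R" using s1(1) S1(2) by blast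
    obtain i r where ir: "i \<in> I" "r \<in> carrier R" "x \<ominus> s1 = i \<oplus> r \<otimes> a"
      using s1(2) unfolding plusI_def by blast
    have ic: "i \<in> carrier R" using ir(1) I.Icarr by simp
    obtain s2 where s2: "s2 \<in> S2" "r \<ominus> s2 \<in> colI R I a" using S2(3) ir(2) by blast
    have s2c: "s2 \<in> carrier R" using s2(1) S2(2) by blast
    have m: "(r \<ominus> s2) \<otimes> a \<in> I" using s2(2) unfolding colI_def by simp
    have "x \<ominus> (s1 \<oplus> s2 \<otimes> a) = (x \<ominus> s1) \<ominus> s2 \<otimes> a" using x s1c s2c a by algebra
    also have "\<dots> = (i \<oplus> r \<otimes> a) \<ominus> s2 \<otimes> a" unfolding ir(3) by (rule refl)
    also have "\<dots> = i \<oplus> (r \<ominus> s2) \<otimes> a" using ic ir(2) s2c a by algebra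
    finally have "x \<ominus> (s1 \<oplus> s2 \<otimes> a) \<in> I" using I.a_closed[OF ir(1) m] by simp
    moreover have "s1 \<oplus> s2 \<otimes> a \<in> S" unfolding S_def using s1(1) s2(1) by force
    ultimately show "\<exists>s\<in>S. x \<ominus> s \<in> I" by blast
  qed
  ultimately show ?thesis unfolding fincos_def by blast
qed

lemma fin_quot_fincos:
  assumes M: "ideal M R" and fin: "finite (carrier (R Quot M))"
  shows "fincos R M"
proof -
  define rep where "rep = (\<lambda>X. SOME a. a \<in> carrier R \<and> X = M +> a)"
  have rep: "rep X \<in> carrier R \<and> X = M +> rep X" if "X \<in> carrier (R Quot M)" for X
  proof -
    have "\<exists>a. a \<in> carrier R \<and> X = M +> a" using quot_carrier_rep[OF M that] by blast
    then show ?thesis unfolding rep_def by (rule someI_ex)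
  qed
  define S where "S = rep ` carrier (R Quot M)"
  have "finite S" unfolding S_def using fin by simp
  moreover have "S \<subseteq> carrier R" unfolding S_def using rep by auto
  moreover have "\<forall>x\<in>carrier R. \<exists>s\<in>S. x \<ominus> s \<in> M"
  proof
    fix x assume x: "x \<in> carrier R"
    have X: "M +> x \<in> carrier (R Quot M)" using ring_hom_closed[OF ideal.rcos_ring_hom[OF M] x] .
    have r: "rep (M +> x) \<in> carrier R" "M +> x = M +> rep (M +> x)" using rep[OF X] by auto
    have "x \<ominus> rep (M +> x) \<in> M" using quotient_eq_iff_same_a_r_cos[OF M x r(1)] r(2) by simp
    moreover have "rep (M +> x) \<in> S" unfolding S_def using X by simp
    ultimately show "\<exists>s\<in>S. x \<ominus> s \<in> M" by blast
  qed
  ultimately show ?thesis unfolding fincos_def by blast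
qed

lemma fincos_carrier: "fincos R (carrier R)"
  unfolding fincos_def by (intro exI[of _ "{\<zero>}"]) auto

lemma exists_max_above:
  assumes N: "noetherian_ring R" and P: "ideal P R" "P \<noteq> carrier R"
  shows "\<exists>M. maximalideal M R \<and> P \<subseteq> M"
proof -
  interpret N: noetherian_ring R by fact
  define S where "S = {K. ideal K R \<and> P \<subseteq> K \<and> K \<noteq> carrier R}"
  have "P \<in> S" unfolding S_def using P by simp
  then have "S \<noteq> {}" by blast
  moreover have "S \<subseteq> {I. ideal I R}" unfolding S_def by blast
  ultimately have "\<exists>M\<in>S. \<forall>X\<in>S. M \<subseteq> X \<longrightarrow> X = M" by (rule N.noeth_max)
  then obtain M where MS: "M \<in> S" and Mmax: "\<And>X. X \<in> S \<Longrightarrow> M \<subseteq> X \<Longrightarrow> X = M" by blast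
  have M: "ideal M R" "P \<subseteq> M" "M \<noteq> carrier R" using MS unfolding S_def by auto
  have "maximalideal M R"
  proof (rule maximalidealI[OF M(1)])
    show "carrier R \<noteq> M" using M(3) by simp
    fix K assume K: "ideal K R" "M \<subseteq> K" "K \<subseteq> carrier R"
    show "K = M \<or> K = carrier R"
    proof (cases "K = carrier R")
      case False
      then have "K \<in> S" unfolding S_def using K M(2) by auto
      then show ?thesis using Mmax K(2) by simp
    qed simp
  qed
  then show ?thesis using M(2) by (intro exI[of _ M]) simp
qed

lemma fincos_noeth:
  assumes N: "noetherian_ring R"
    and res: "\<forall>M. maximalideal M R \<longrightarrow> finite (carrier (R Quot M))"
    and I0: "ideal I0 R" and c0: "condC R I0"
  shows "fincos R I0"
proof (rule ccontr)
  assume nf: "\<not> fincos R I0"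
  interpret N: noetherian_ring R by fact
  define S where "S = {K. ideal K R \<and> condC R K \<and> \<not> fincos R K}"
  have "I0 \<in> S" unfolding S_def using I0 c0 nf by simp
  then have "S \<noteq> {}" by blast
  moreover have "S \<subseteq> {I. ideal I R}" unfolding S_def by blast
  ultimately have "\<exists>M\<in>S. \<forall>X\<in>S. M \<subseteq> X \<longrightarrow> X = M" by (rule N.noeth_max)
  then obtain I where IS: "I \<in> S" and Imax: "\<And>X. X \<in> S \<Longrightarrow> I \<subseteq> X \<Longrightarrow> X = I" by blast
  have I: "ideal I R" "condC R I" "\<not> fincos R I" using IS unfolding S_def by auto
  interpret I: ideal I R by fact
  have big: "fincos R K" if "ideal K R" "I \<subseteq> K" "K \<noteq> I" for K
  proof (rule ccontr)
    assume "\<not> fincos R K"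
    moreover have "condC R K" by (rule condC_mono[OF I(2) that(2)])
    ultimately have "K \<in> S" unfolding S_def using that(1) by simp
    then show False using Imax that(2,3) by blast
  qed
  have Inc: "I \<noteq> carrier R" using I(3) fincos_carrier by auto
  show False
  proof (cases "primeideal I R")
    case True
    obtain M where M: "maximalideal M R" "I \<subseteq> M" using exists_max_above[OF N I(1) Inc] by (elim exE conjE)
    have "primeideal M R" by (rule maximalideal_prime[OF M(1)])
    then have "I = M" using I(2) True M(2) unfolding condC_def by simp
    then have "finite (carrier (R Quot I))" using res M(1) by simp
    then have "fincos R I" by (rule fin_quot_fincos[OF I(1)])
    then show False using I(3) by simp
  next
    case False
    have "\<exists>a b. a \<in> carrier R \<and> b \<in> carrier R \<and> a \<otimes> b \<in> I \<and> a \<notin> I \<and> b \<notin> I"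
    proof (rule ccontr)
      assume "\<not> ?thesis"
      then have "primeideal I R"
        by (intro primeidealI[OF I(1) is_cring]) (use Inc in auto)
      then show False using False by simp
    qed
    then obtain a b where ab: "a \<in> carrier R" "b \<in> carrier R" "a \<otimes> b \<in> I" "a \<notin> I" "b \<notin> I"
      by (elim exE conjE)
    have f1: "fincos R (plusI R I a)"
    proof (rule big[OF plusI_ideal[OF I(1) ab(1)] plusI_sup(1)[OF I(1) ab(1)]])
      show "plusI R I a \<noteq> I" using plusI_sup(2)[OF I(1) ab(1)] ab(4) by auto
    qed
    have sub2: "I \<subseteq> colI R I a" unfolding colI_def using I.I_r_closed ab(1) I.Icarr by auto
    have "b \<in> colI R I a" unfolding colI_def using ab(2,3) m_comm[OF ab(1,2)] by simp
    then have ne2: "colI R I a \<noteq> I" using ab(5) by auto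
    have f2: "fincos R (colI R I a)" by (rule big[OF colI_ideal[OF I(1) ab(1)] sub2 ne2])
    have "fincos R I" by (rule fincos_combine[OF I(1) ab(1) f1 f2])
    then show False using I(3) by simp
  qed
qed

lemma fincos_finite_supers:
  assumes I: "ideal I R" and f: "fincos R I"
  shows "finite {K. ideal K R \<and> I \<subseteq> K}"
proof -
  obtain S where S: "finite S" "S \<subseteq> carrier R" "\<forall>x\<in>carrier R. \<exists>s\<in>S. x \<ominus> s \<in> I"
    using f unfolding fincos_def by (elim exE conjE)
  have inj: "inj_on (\<lambda>K. K \<inter> S) {K. ideal K R \<and> I \<subseteq> K}"
  proof (rule inj_onI)
    fix K1 K2 assume K1: "K1 \<in> {K. ideal K R \<and> I \<subseteq> K}" and K2: "K2 \<in> {K. ideal K R \<and> I \<subseteq> K}"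
      and eq: "K1 \<inter> S = K2 \<inter> S"
    have half: "A \<subseteq> B" if A: "ideal A R" "I \<subseteq> A" and B: "ideal B R" "I \<subseteq> B" and e: "A \<inter> S = B \<inter> S" for A B
    proof
      fix x assume xA: "x \<in> A"
      have xc: "x \<in> carrier R" using xA ideal.Icarr[OF A(1)] by blast
      obtain s where s: "s \<in> S" "x \<ominus> s \<in> I" using S(3) xc by blast
      have sc: "s \<in> carrier R" using s(1) S(2) by blast
      have "x \<ominus> s \<in> A" using s(2) A(2) by blast
      have "s = (\<ominus> (x \<ominus> s)) \<oplus> x" using xc sc by algebra
      moreover have "\<ominus> (x \<ominus> s) \<in> A"
        using additive_subgroup.a_inv_closed[OF ideal.axioms(1)[OF A(1)] \<open>x \<ominus> s \<in> A\<close>] .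
      ultimately have "s \<in> A" using additive_subgroup.a_closed[OF ideal.axioms(1)[OF A(1)]] xA by metis
      then have "s \<in> B" using e s(1) by blast
      have "x = (x \<ominus> s) \<oplus> s" using xc sc by algebra
      moreover have "x \<ominus> s \<in> B" using s(2) B(2) by blast
      ultimately show "x \<in> B" using additive_subgroup.a_closed[OF ideal.axioms(1)[OF B(1)]] \<open>s \<in> B\<close> by metis
    qed
    show "K1 = K2"
    proof
      show "K1 \<subseteq> K2" using half[of K1 K2] K1 K2 eq by simp
      show "K2 \<subseteq> K1" using half[of K2 K1] K1 K2 eq by simp
    qed
  qed
  have "(\<lambda>K. K \<inter> S) ` {K. ideal K R \<and> I \<subseteq> K} \<subseteq> Pow S" by blast
  then have "finite ((\<lambda>K. K \<inter> S) ` {K. ideal K R \<and> I \<subseteq> K})" using S(1) finite_subset by blast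
  then show ?thesis using inj finite_imageD by blast
qed

end


lemma zb_inter: "zariski_basic R F1 \<inter> zariski_basic R F2 = zariski_basic R (F1 \<union> F2)"
  unfolding zariski_basic_def by auto

lemma zar_open_basic:
  assumes "openin (zariski_ideals R) U" "J \<in> U"
  shows "\<exists>F. finite F \<and> F \<subseteq> carrier R \<and> J \<in> zariski_basic R F \<and> zariski_basic R F \<subseteq> U"
proof -
  have "generate_topology_on {zariski_basic R F | F. finite F \<and> F \<subseteq> carrier R} U"
    using assms(1) unfolding zariski_ideals_def by (rule openin_topology_generated_by)
  then show ?thesis using assms(2)
  proof (induction arbitrary: J)
    case Empty
    then show ?case by simp
  next
    case (Int a b)
    obtain F1 where F1: "finite F1" "F1 \<subseteq> carrier R" "J \<in> zariski_basic R F1" "zariski_basic R F1 \<subseteq> a"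
      using Int.IH(1)[of J] Int.prems by blast
    obtain F2 where F2: "finite F2" "F2 \<subseteq> carrier R" "J \<in> zariski_basic R F2" "zariski_basic R F2 \<subseteq> b"
      using Int.IH(2)[of J] Int.prems by blast
    show ?case
      by (rule exI[of _ "F1 \<union> F2"]) (use F1 F2 zb_inter[of R F1 F2] in blast)
  next
    case (UN K)
    then obtain k where "k \<in> K" "J \<in> k" by blast
    then show ?case using UN.IH[of k J] by blast
  next
    case (Basis s)
    then show ?case by blast
  qed
qed

lemma zb_ideal: "I \<in> zariski_basic R F \<longleftrightarrow> ideal I R \<and> F \<subseteq> I"
  unfolding zariski_basic_def ideals_of_def by simp

lemma zb_open: "finite F \<Longrightarrow> F \<subseteq> carrier R \<Longrightarrow> openin (zariski_ideals R) (zariski_basic R F)"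
  unfolding zariski_ideals_def openin_topology_generated_by_iff
  by (rule generate_topology_on.Basis) blast

lemma zar_topspace: "topspace (zariski_ideals R) = ideals_of R"
proof -
  have "topspace (zariski_ideals R) = \<Union>{zariski_basic R F | F. finite F \<and> F \<subseteq> carrier R}"
    unfolding zariski_ideals_def by (rule topology_generated_by_topspace)
  also have "\<dots> = ideals_of R"
  proof
    show "\<Union>{zariski_basic R F | F. finite F \<and> F \<subseteq> carrier R} \<subseteq> ideals_of R"
      unfolding zariski_basic_def by blast
    have "zariski_basic R {} = ideals_of R" unfolding zariski_basic_def by simp
    then show "ideals_of R \<subseteq> \<Union>{zariski_basic R F | F. finite F \<and> F \<subseteq> carrier R}" by blast
  qed
  finally show ?thesis .
qed

lemma zb_compact:
  assumes R: "ring R" and F: "finite F" "F \<subseteq> carrier R"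
  shows "compactin (zariski_ideals R) (zariski_basic R F)"
  unfolding compactin_def
proof (intro conjI allI impI)
  show "zariski_basic R F \<subseteq> topspace (zariski_ideals R)"
    unfolding zar_topspace zariski_basic_def by blast
  fix U assume U: "(\<forall>u\<in>U. openin (zariski_ideals R) u) \<and> zariski_basic R F \<subseteq> \<Union>U"
  have idl: "ideal (Idl\<^bsub>R\<^esub> F) R" by (rule ring.genideal_ideal[OF R F(2)])
  have self: "F \<subseteq> Idl\<^bsub>R\<^esub> F" by (rule ring.genideal_self[OF R F(2)])
  have "Idl\<^bsub>R\<^esub> F \<in> zariski_basic R F" unfolding zb_ideal using idl self by simp
  then obtain u where u: "u \<in> U" "Idl\<^bsub>R\<^esub> F \<in> u" using U by blast
  obtain F' where F': "finite F'" "F' \<subseteq> carrier R" "Idl\<^bsub>R\<^esub> F \<in> zariski_basic R F'"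
    "zariski_basic R F' \<subseteq> u"
    using zar_open_basic[of R u "Idl\<^bsub>R\<^esub> F"] U u by blast
  have "zariski_basic R F \<subseteq> zariski_basic R F'"
  proof
    fix J assume "J \<in> zariski_basic R F"
    then have J: "ideal J R" "F \<subseteq> J" unfolding zb_ideal by auto
    have "Idl\<^bsub>R\<^esub> F \<subseteq> J" by (rule ring.genideal_minimal[OF R J])
    moreover have "F' \<subseteq> Idl\<^bsub>R\<^esub> F" using F'(3) unfolding zb_ideal by simp
    ultimately show "J \<in> zariski_basic R F'" unfolding zb_ideal using J(1) by blast
  qed
  then have "zariski_basic R F \<subseteq> \<Union>{u}" using F'(4) by blast
  then show "\<exists>V. finite V \<and> V \<subseteq> U \<and> zariski_basic R F \<subseteq> \<Union>V" using u(1)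
    by (intro exI[of _ "{u}"]) simp
qed

definition nbhd :: "('a, 'b) ring_scheme \<Rightarrow> 'a set \<Rightarrow> 'a set \<Rightarrow> 'a set set" where
  "nbhd R F G = {I \<in> ideals_of R. F \<subseteq> I \<and> (\<forall>g\<in>G. g \<notin> I)}"

lemma constr_open_nbhd:
  assumes R: "ring R" and U: "openin (constructible_ideals R) U" and J: "J \<in> U" "ideal J R"
  shows "\<exists>F G. finite F \<and> F \<subseteq> carrier R \<and> finite G \<and> F \<subseteq> J \<and> (\<forall>g\<in>G. g \<notin> J) \<and>
    nbhd R F G \<subseteq> U"
proof -
  let ?B = "{U. openin (zariski_ideals R) U \<and> compactin (zariski_ideals R) U} \<union>
      {ideals_of R - U | U. openin (zariski_ideals R) U \<and> compactin (zariski_ideals R) U}"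
  have "generate_topology_on ?B U"
    using U unfolding constructible_ideals_def by (rule openin_topology_generated_by)
  then show ?thesis using J
  proof (induction arbitrary: J)
    case Empty
    then show ?case by simp
  next
    case (Int a b)
    obtain F1 G1 where A: "finite F1" "F1 \<subseteq> carrier R" "finite G1" "F1 \<subseteq> J" "\<forall>g\<in>G1. g \<notin> J"
      "nbhd R F1 G1 \<subseteq> a"
      using Int.IH(1)[of J] Int.prems by blast
    obtain F2 G2 where B: "finite F2" "F2 \<subseteq> carrier R" "finite G2" "F2 \<subseteq> J" "\<forall>g\<in>G2. g \<notin> J"
      "nbhd R F2 G2 \<subseteq> b"
      using Int.IH(2)[of J] Int.prems by blast
    have n: "nbhd R (F1 \<union> F2) (G1 \<union> G2) \<subseteq> a \<inter> b"
      using A(6) B(6) unfolding nbhd_def by blast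
    show ?case
      by (rule exI[of _ "F1 \<union> F2"], rule exI[of _ "G1 \<union> G2"]) (use A B n in auto)
  next
    case (UN K)
    then obtain k where "k \<in> K" "J \<in> k" by blast
    then show ?case using UN.IH[of k J] UN.prems by blast
  next
    case (Basis s)
    show ?case
    proof (cases "openin (zariski_ideals R) s \<and> compactin (zariski_ideals R) s")
      case True
      obtain F where F: "finite F" "F \<subseteq> carrier R" "J \<in> zariski_basic R F" "zariski_basic R F \<subseteq> s"
        using zar_open_basic[of R s J] True Basis.prems by blast
      have n: "nbhd R F {} = zariski_basic R F" unfolding nbhd_def zariski_basic_def by simp
      show ?thesis
        by (rule exI[of _ F], rule exI[of _ "{}"]) (use F n zb_ideal[of J R F] in simp)
    next
      case False
      then obtain V where V: "openin (zariski_ideals R) V" "compactin (zariski_ideals R) V"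
        "s = ideals_of R - V" using Basis.hyps by blast
      define C where "C = {zariski_basic R F | F. finite F \<and> F \<subseteq> carrier R \<and> zariski_basic R F \<subseteq> V}"
      have Copen: "\<forall>u\<in>C. openin (zariski_ideals R) u" unfolding C_def using zb_open by blast
      have "V \<subseteq> \<Union>C"
      proof
        fix x assume "x \<in> V"
        then obtain F where "finite F" "F \<subseteq> carrier R" "x \<in> zariski_basic R F" "zariski_basic R F \<subseteq> V"
          using zar_open_basic[OF V(1)] by blast
        then show "x \<in> \<Union>C" unfolding C_def by blast
      qed
      then obtain W where W: "finite W" "W \<subseteq> C" "V \<subseteq> \<Union>W"
        using V(2) Copen unfolding compactin_def by meson
      have JV: "J \<notin> V" using Basis.prems V(3) by blast
      have "\<forall>w\<in>W. \<exists>g. (\<forall>I\<in>w. g \<in> I) \<and> g \<notin> J"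
      proof
        fix w assume "w \<in> W"
        then obtain F where F: "w = zariski_basic R F" "zariski_basic R F \<subseteq> V" using W(2) unfolding C_def by blast
        have "\<not> F \<subseteq> J"
        proof
          assume "F \<subseteq> J"
          then have "J \<in> zariski_basic R F" using zb_ideal[of J R F] Basis.prems by simp
          then show False using F(2) JV by blast
        qed
        then obtain g where "g \<in> F" "g \<notin> J" by blast
        moreover have "\<forall>I\<in>w. g \<in> I" using F(1) \<open>g \<in> F\<close> unfolding zariski_basic_def by blast
        ultimately show "\<exists>g. (\<forall>I\<in>w. g \<in> I) \<and> g \<notin> J" by blast
      qed
      then obtain gs where gs: "\<forall>w\<in>W. (\<forall>I\<in>w. gs w \<in> I) \<and> gs w \<notin> J" using bchoice by metis
      have n: "nbhd R {} (gs ` W) \<subseteq> s"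
      proof
        fix I assume I: "I \<in> nbhd R {} (gs ` W)"
        have "I \<notin> V"
        proof
          assume "I \<in> V"
          then obtain w where "w \<in> W" "I \<in> w" using W(3) by blast
          then show False using gs I unfolding nbhd_def by blast
        qed
        then show "I \<in> s" using I V(3) unfolding nbhd_def by blast
      qed
      show ?thesis
        by (rule exI[of _ "{}"], rule exI[of _ "gs ` W"]) (use gs W(1) n in auto)
    qed
  qed
qed



lemma constr_topspace:
  assumes R: "ring R"
  shows "topspace (constructible_ideals R) = ideals_of R"
proof -
  let ?B = "{U. openin (zariski_ideals R) U \<and> compactin (zariski_ideals R) U} \<union>
      {ideals_of R - U | U. openin (zariski_ideals R) U \<and> compactin (zariski_ideals R) U}"
  have "topspace (constructible_ideals R) = \<Union>?B"
    unfolding constructible_ideals_def by (rule topology_generated_by_topspace)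
  also have "\<dots> = ideals_of R"
  proof
    show "\<Union>?B \<subseteq> ideals_of R"
    proof
      fix x assume "x \<in> \<Union>?B"
      then obtain U where U: "U \<in> ?B" "x \<in> U" by blast
      show "x \<in> ideals_of R"
      proof (cases "openin (zariski_ideals R) U")
        case True
        then have "U \<subseteq> topspace (zariski_ideals R)" by (rule openin_subset)
        then show ?thesis using U(2) zar_topspace[of R] by blast
      next
        case False
        then show ?thesis using U by blast
      qed
    qed
    have e: "zariski_basic R {} = ideals_of R" unfolding zariski_basic_def by simp
    have "openin (zariski_ideals R) (zariski_basic R {})" by (rule zb_open) auto
    moreover have "compactin (zariski_ideals R) (zariski_basic R {})" by (rule zb_compact[OF R]) auto
    ultimately have "ideals_of R \<in> ?B" unfolding e by blast
    then show "ideals_of R \<subseteq> \<Union>?B" by blast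
  qed
  finally show ?thesis .
qed

lemma constr_basis_open:
  assumes "openin (zariski_ideals R) U" "compactin (zariski_ideals R) U"
  shows "openin (constructible_ideals R) U" "openin (constructible_ideals R) (ideals_of R - U)"
  unfolding constructible_ideals_def openin_topology_generated_by_iff
  by (rule generate_topology_on.Basis, use assms in blast)+

theorem proposition5p5:
  fixes R :: "('a, 'b) ring_scheme" (structure)
  assumes "cring R" and "noetherian_ring R"
  defines "Ctop \<equiv> subtopology (constructible_ideals R) (proper_ideals_of R)"
  defines "P0 \<equiv> {I \<in> proper_ideals_of R. krull_dim (R Quot I) = 0}"
  shows "(P0 \<subseteq> topspace Ctop \<and> Ctop closure_of P0 = topspace Ctop) \<and>
         ((\<forall>M. maximalideal M R \<longrightarrow> finite (carrier (R Quot M))) \<longrightarrow>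
           (\<forall>D. D \<subseteq> topspace Ctop \<and> Ctop closure_of D = topspace Ctop \<longrightarrow> P0 \<subseteq> D))"
proof -
  interpret cring R by fact
  have N: "noetherian_ring R" by fact
  have R: "ring R" by (rule ring_axioms)
  have topC: "topspace Ctop = proper_ideals_of R"
    unfolding Ctop_def topspace_subtopology constr_topspace[OF R]
    unfolding proper_ideals_of_def ideals_of_def by blast
  have P0sub: "P0 \<subseteq> topspace Ctop" unfolding topC P0_def by blast
  have dense: "Ctop closure_of P0 = topspace Ctop"
  proof
    show "Ctop closure_of P0 \<subseteq> topspace Ctop" by (rule closure_of_subset_topspace)
    show "topspace Ctop \<subseteq> Ctop closure_of P0"
    proof
      fix J assume Jt: "J \<in> topspace Ctop"
      then have J: "ideal J R" "J \<noteq> carrier R" unfolding topC proper_ideals_of_def by auto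
      show "J \<in> Ctop closure_of P0" unfolding in_closure_of
      proof (intro conjI allI impI)
        show "J \<in> topspace Ctop" by fact
        fix T assume T: "J \<in> T \<and> openin Ctop T"
        then obtain U where U: "openin (constructible_ideals R) U" "T = U \<inter> proper_ideals_of R"
          unfolding Ctop_def openin_subtopology by blast
        have JU: "J \<in> U" using T U(2) by blast
        obtain F G where FG: "finite F" "F \<subseteq> carrier R" "finite G" "F \<subseteq> J" "\<forall>g\<in>G. g \<notin> J"
          "nbhd R F G \<subseteq> U"
          using constr_open_nbhd[OF R U(1) JU J(1)] by blast
        obtain I where I: "ideal I R" "I \<noteq> carrier R" "J \<subseteq> I" "\<forall>g\<in>G. g \<notin> I" "condC R I"
          using main_alg[OF N J(1) J(2) FG(3) FG(5)] by (elim exE conjE)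
        have "I \<in> nbhd R F G" unfolding nbhd_def ideals_of_def using I FG(4) by auto
        then have "I \<in> U" using FG(6) by blast
        moreover have "krull_dim (R Quot I) = 0" using krull_zero_iff[OF I(1)] I(5) by simp
        moreover have "I \<in> proper_ideals_of R" unfolding proper_ideals_of_def using I by simp
        ultimately show "\<exists>y. y \<in> P0 \<and> y \<in> T" unfolding P0_def U(2) by blast
      qed
    qed
  qed
  have part2: "P0 \<subseteq> D" if res: "\<forall>M. maximalideal M R \<longrightarrow> finite (carrier (R Quot M))"
    and D: "D \<subseteq> topspace Ctop" "Ctop closure_of D = topspace Ctop" for D
  proof
    fix I assume IP: "I \<in> P0"
    then have I: "ideal I R" "I \<noteq> carrier R" "krull_dim (R Quot I) = 0"
      unfolding P0_def proper_ideals_of_def by auto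
    have c: "condC R I" using krull_zero_iff[OF I(1)] I(3) by simp
    have fc: "fincos R I" by (rule fincos_noeth[OF N res I(1) c])
    define K where "K = {K. ideal K R \<and> I \<subseteq> K} - {I}"
    have Kfin: "finite K" unfolding K_def using fincos_finite_supers[OF I(1) fc] by simp
    have "\<forall>X\<in>insert I K. \<exists>A. finite A \<and> A \<subseteq> carrier R \<and> X = Idl A"
    proof
      fix X assume "X \<in> insert I K"
      then have "ideal X R" unfolding K_def using I(1) by auto
      then show "\<exists>A. finite A \<and> A \<subseteq> carrier R \<and> X = Idl A"
        using noetherian_ring.finetely_gen[OF N] by blast
    qed
    then obtain A where A: "\<forall>X\<in>insert I K. finite (A X) \<and> A X \<subseteq> carrier R \<and> X = Idl (A X)"
      using bchoice by metis
    have zbA: "zariski_basic R (A X) = {Y. ideal Y R \<and> X \<subseteq> Y}" if "X \<in> insert I K" for X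
    proof -
      have a: "finite (A X)" "A X \<subseteq> carrier R" "X = Idl (A X)" using A that by auto
      show ?thesis
      proof
        show "zariski_basic R (A X) \<subseteq> {Y. ideal Y R \<and> X \<subseteq> Y}"
        proof
          fix Y assume "Y \<in> zariski_basic R (A X)"
          then have Y: "ideal Y R" "A X \<subseteq> Y" unfolding zb_ideal by auto
          have "Idl (A X) \<subseteq> Y" by (rule genideal_minimal[OF Y])
          then show "Y \<in> {Y. ideal Y R \<and> X \<subseteq> Y}" using Y(1) a(3) by simp
        qed
        show "{Y. ideal Y R \<and> X \<subseteq> Y} \<subseteq> zariski_basic R (A X)"
        proof
          fix Y assume Y: "Y \<in> {Y. ideal Y R \<and> X \<subseteq> Y}"
          have "A X \<subseteq> Idl (A X)" by (rule genideal_self[OF a(2)])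
          then show "Y \<in> zariski_basic R (A X)" unfolding zb_ideal using Y a(3) by auto
        qed
      qed
    qed
    define U where "U = \<Inter>(insert (zariski_basic R (A I)) ((\<lambda>X. ideals_of R - zariski_basic R (A X)) ` K))"
    have Uopen: "openin (constructible_ideals R) U"
      unfolding U_def
    proof (rule openin_Inter)
      show "finite (insert (zariski_basic R (A I)) ((\<lambda>X. ideals_of R - zariski_basic R (A X)) ` K))"
        using Kfin by simp
      show "insert (zariski_basic R (A I)) ((\<lambda>X. ideals_of R - zariski_basic R (A X)) ` K) \<noteq> {}" by simp
      fix Y assume Y: "Y \<in> insert (zariski_basic R (A I)) ((\<lambda>X. ideals_of R - zariski_basic R (A X)) ` K)"
      have oc: "openin (zariski_ideals R) (zariski_basic R (A X)) \<and> compactin (zariski_ideals R) (zariski_basic R (A X))"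
        if "X \<in> insert I K" for X
      proof -
        have a: "finite (A X)" "A X \<subseteq> carrier R" using A that by auto
        show ?thesis using zb_open[OF a] zb_compact[OF R a] by simp
      qed
      show "openin (constructible_ideals R) Y"
      proof (cases "Y = zariski_basic R (A I)")
        case True
        have o: "openin (constructible_ideals R) (zariski_basic R (A I))"
          using oc[of I] by (intro constr_basis_open(1)) auto
        then show ?thesis using True by simp
      next
        case False
        then obtain X where X: "X \<in> K" "Y = ideals_of R - zariski_basic R (A X)" using Y by blast
        have o: "openin (constructible_ideals R) (ideals_of R - zariski_basic R (A X))"
          using oc[of X] X(1) by (intro constr_basis_open(2)) auto
        then show ?thesis using X(2) by simp
      qed
    qed
    have IU: "I \<in> U"
    proof -
      have "I \<in> zariski_basic R (A I)" using zbA[of I] I(1) by simp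
      moreover have "I \<in> ideals_of R - zariski_basic R (A X)" if "X \<in> K" for X
      proof -
        have "X \<noteq> I" "I \<subseteq> X" using that unfolding K_def by auto
        then have "\<not> X \<subseteq> I" by blast
        then show ?thesis using zbA[of X] that I(1) unfolding ideals_of_def by simp
      qed
      ultimately show ?thesis unfolding U_def by blast
    qed
    have Uonly: "Y = I" if "Y \<in> U" for Y
    proof (rule ccontr)
      assume ne: "Y \<noteq> I"
      have "Y \<in> zariski_basic R (A I)" using that unfolding U_def by blast
      then have Y: "ideal Y R" "I \<subseteq> Y" using zbA[of I] by auto
      then have YK: "Y \<in> K" unfolding K_def using ne by simp
      then have "Y \<in> ideals_of R - zariski_basic R (A Y)" using that unfolding U_def by blast
      moreover have "Y \<in> zariski_basic R (A Y)" using zbA[of Y] YK Y(1) by simp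
      ultimately show False by blast
    qed
    have "I \<in> topspace Ctop" using IP P0sub by blast
    then have "I \<in> Ctop closure_of D" using D(2) by simp
    moreover have "openin Ctop (U \<inter> proper_ideals_of R)"
      unfolding Ctop_def openin_subtopology using Uopen by blast
    moreover have "I \<in> U \<inter> proper_ideals_of R" using IU IP unfolding P0_def by blast
    ultimately obtain y where "y \<in> D" "y \<in> U \<inter> proper_ideals_of R"
      unfolding in_closure_of by blast
    then show "I \<in> D" using Uonly by blast
  qed
  show ?thesis using P0sub dense part2 by blast
qed


end
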